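(* Fix $\nu>1$ and let $F_{\text{2d}}=\nu(\nu+1)/\sqrt{\nu^2+\nu-1}$. There exist $\delta>0$ and functions $\eta(F)>0$, $\tau_*(F)>0$ defined for $F\in(F_{\text{2d}},F_{\text{2d}}+\delta)$, with $\eta(F)\to\infty$ and $\tau_*(F)\to\infty$ as $F\to F_{\text{2d}}^+$, such that for every such $F$ and every choice of signs, the matrix $G(-\infty;\pm i\tau_*(F),\pm\eta(F))$ has a double eigenvalue (i.e. its two eigenvalues of smallest real part, $\gamma_{1,-}$ and $\gamma_{2,-}$, coincide) whose real part is strictly smaller than the real part of its remaining eigenvalue.
   Context: $G(-\infty;\lambda,\eta)=(E-\lambda I-i\eta A_2)A_1^{-1}$ with, at $(H,Q)=(1,1)$ and $s=\frac{\nu^2+\nu+1}{\nu(\nu+1)}$, $A_1=\begin{pmatrix}-s&1&0\\ H/F^2-Q^2/H^2&2Q/H-s&0\\0&0&Q/H-s\end{pmatrix}$, $A_2=\begin{pmatrix}0&0&1\\0&0&Q/H\\ H/F^2&0&0\end{pmatrix}$, $E=\begin{pmatrix}0&0&0\\ 2Q^2/H^3+1&-2Q/H^2&0\\0&0&-Q/H^2\end{pmatrix}$. This is the limiting coefficient matrix of the eigenvalue ODE at the upstream endstate $(1,1,0)$ of a planar hydraulic shock of the inviscid Saint-Venant equations with Froude number $F$ and downstream state $(\nu^{-2},\nu^{-3},0)$. *)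

theory Defs
  imports "HOL-Analysis.Analysis"
begin

text \<open>Saint-Venant hydraulic shock: limiting coefficient matrix of the eigenvalue ODE
  at the upstream endstate (H,Q,0), parameters nu (shock strength), F (Froude number).\<close>

definition sv_s :: "real \<Rightarrow> real" where
  "sv_s \<nu> = (\<nu>^2 + \<nu> + 1) / (\<nu> * (\<nu> + 1))"

definition sv_A1 :: "real \<Rightarrow> real \<Rightarrow> real \<Rightarrow> real \<Rightarrow> complex^3^3" where
  "sv_A1 \<nu> F H Q = (let s = sv_s \<nu> in
     vector [vector [complex_of_real (- s), 1, 0],
             vector [complex_of_real (H / F^2 - Q^2 / H^2), complex_of_real (2*Q/H - s), 0],
             vector [0, 0, complex_of_real (Q/H - s)]])"

definition sv_A2 :: "real \<Rightarrow> real \<Rightarrow> real \<Rightarrow> complex^3^3" where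
  "sv_A2 F H Q =
     vector [vector [0, 0, 1],
             vector [0, 0, complex_of_real (Q/H)],
             vector [complex_of_real (H / F^2), 0, 0]]"

definition sv_E :: "real \<Rightarrow> real \<Rightarrow> complex^3^3" where
  "sv_E H Q =
     vector [vector [0, 0, 0],
             vector [complex_of_real (2*Q^2/H^3 + 1), complex_of_real (-2*Q/H^2), 0],
             vector [0, 0, complex_of_real (-Q/H^2)]]"

definition sv_G :: "real \<Rightarrow> real \<Rightarrow> complex \<Rightarrow> real \<Rightarrow> complex^3^3" where
  "sv_G \<nu> F lam \<eta> =
     (sv_E 1 1 - mat lam - mat (\<i> * complex_of_real \<eta>) ** sv_A2 F 1 1)
       ** matrix_inv (sv_A1 \<nu> F 1 1)"

definition char_fun :: "complex^3^3 \<Rightarrow> complex \<Rightarrow> complex" where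
  "char_fun M z = det (mat z - M)"

definition double_lowest_eigenvalue :: "complex^3^3 \<Rightarrow> bool" where
  "double_lowest_eigenvalue M \<longleftrightarrow>
     (\<exists>\<gamma> \<mu>. (\<forall>z. char_fun M z = (z - \<gamma>)^2 * (z - \<mu>)) \<and> Re \<gamma> < Re \<mu>)"

end

theory Submission
  imports Defs
begin

lemma mat_mul_entry: "(mat c ** (A::complex^3^3)) $ i $ j = c * A $ i $ j"
proof -
  have e: "\<And>k. (if i = k then c else 0) * A $ k $ j = (if i = k then c * A $ k $ j else 0)" by simp
  have "(mat c ** A) $ i $ j = (\<Sum>k\<in>UNIV. (if i = k then c else 0) * A $ k $ j)"
    unfolding matrix_matrix_mult_def mat_def by simp
  also have "\<dots> = (\<Sum>k\<in>UNIV. (if i = k then c * A $ k $ j else 0))"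
    by (simp only: e)
  also have "\<dots> = c * A $ i $ j" by (subst sum.delta') simp_all
  finally show ?thesis .
qed

lemma mat_entry: "(mat c :: complex^3^3) $ i $ j = (if i = j then c else 0)"
  by (simp add: mat_def)

lemma A1_alt: "sv_A1 \<nu> F 1 1 = vector [vector [- complex_of_real (sv_s \<nu>), 1, 0],
   vector [complex_of_real (1/F^2) - 1, 2 - complex_of_real (sv_s \<nu>), 0],
   vector [0, 0, 1 - complex_of_real (sv_s \<nu>)]]"
  by (simp add: sv_A1_def Let_def of_real_diff)

lemma A2_alt: "sv_A2 F 1 1 = vector [vector [0, 0, 1], vector [0, 0, 1], vector [complex_of_real (1/F^2), 0, 0]]"
  by (simp add: sv_A2_def)

lemma E_alt: "sv_E 1 1 = vector [vector [0, 0, 0], vector [3, -2, 0], vector [0, 0, -1]]"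
  by (simp add: sv_E_def)

lemma det_M: fixes z lam k :: complex and \<nu> F :: real
  defines "s \<equiv> complex_of_real (sv_s \<nu>)" and "a \<equiv> complex_of_real (1/F^2)"
  defines "c \<equiv> (1-s)*z + 1 + lam"
  shows "det (mat z ** sv_A1 \<nu> F 1 1 - (sv_E 1 1 - mat lam - mat k ** sv_A2 F 1 1))
     = c * ((-s*z + lam)*((2-s)*z + 2 + lam) - z*((a-1)*z - 3)) - k^2 * a * (c+1)"
  unfolding A1_alt A2_alt E_alt s_def[symmetric] a_def[symmetric] c_def
  apply (simp add: det_3 mat_mul_entry mat_entry)
  apply (simp add: algebra_simps power2_eq_square)
  done

lemma det_A1': fixes \<nu> F :: real
  defines "s \<equiv> complex_of_real (sv_s \<nu>)" and "a \<equiv> complex_of_real (1/F^2)"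
  shows "det (sv_A1 \<nu> F 1 1) = (1 - s) * (-s * (2 - s) - (a - 1))"
  unfolding A1_alt s_def[symmetric] a_def[symmetric]
  by (simp add: det_3 algebra_simps)
lemma matrix_diff_rdistrib: "((X::complex^3^3) - Y) ** C = X ** C - Y ** C"
  by (simp add: matrix_matrix_mult_def vec_eq_iff sum_subtractf left_diff_distrib)

lemma char_fun_G:
  assumes nz: "det (sv_A1 \<nu> F 1 1) \<noteq> 0"
  shows "char_fun (sv_G \<nu> F lam \<eta>) z =
    det (mat z ** sv_A1 \<nu> F 1 1 - (sv_E 1 1 - mat lam - mat (\<i> * complex_of_real \<eta>) ** sv_A2 F 1 1))
      / det (sv_A1 \<nu> F 1 1)"
proof -
  let ?A = "sv_A1 \<nu> F 1 1"
  let ?B = "sv_E 1 1 - mat lam - mat (\<i> * complex_of_real \<eta>) ** sv_A2 F 1 1"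
  have "invertible ?A" using nz invertible_det_nz by blast
  then have "\<exists>A'. ?A ** A' = mat 1 \<and> A' ** ?A = mat 1" unfolding invertible_def .
  then have inv: "?A ** matrix_inv ?A = mat 1 \<and> matrix_inv ?A ** ?A = mat 1"
    unfolding matrix_inv_def by (rule someI_ex)
  have "(mat z - ?B ** matrix_inv ?A) ** ?A = mat z ** ?A - ?B"
    by (simp add: matrix_diff_rdistrib matrix_mul_assoc[symmetric] inv)
  then have "det (mat z - ?B ** matrix_inv ?A) * det ?A = det (mat z ** ?A - ?B)"
    by (metis det_mul)
  then show ?thesis
    unfolding char_fun_def sv_G_def using nz by (simp add: field_simps)
qed

lemma poly_fact:
  fixes N b e L u0 u1 z lam k sc a :: complex
  assumes N: "N \<noteq> 0"
    and sc: "sc = 1 + 1/N" and a: "a = b/N^2" and ka: "k^2 * a = - e"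
    and lam: "lam = L - 1"
    and i1: "(b-1)*(2*u0+u1) = 2*b*L - N"
    and i2: "-(b-1)*(u0^2 + 2*u0*u1) = -b*L^2 + N*L - 1 + e"
    and i3: "(b-1)*u0^2*u1 = e"
  shows "((1-sc)*z + 1 + lam) * ((-sc*z + lam)*((2-sc)*z + 2 + lam) - z*((a-1)*z - 3)) - k^2 * a * (((1-sc)*z + 1 + lam)+1)
       = ((b-1)/N^3) * ((z - N*(L-u0))^2 * (z - N*(L-u1)))"
proof -
  define w where "w = L - z/N"
  have z: "z = N*(L-w)" using N unfolding w_def by (simp add: field_simps)
  have c: "(1-sc)*z + 1 + lam = w" unfolding z sc lam using N by (simp add: field_simps)
  have lhs: "((1-sc)*z + 1 + lam) * ((-sc*z + lam)*((2-sc)*z + 2 + lam) - z*((a-1)*z - 3)) - k^2 * a * (((1-sc)*z + 1 + lam)+1)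
     = (1-b)*w^3 + (2*b*L-N)*w^2 + (-b*L^2+N*L-1)*w + e*(w+1)"
    unfolding c ka unfolding z sc lam a using N by (simp add: field_simps) (simp add: algebra_simps power2_eq_square power3_eq_cube)
  have rhs: "((b-1)/N^3) * ((z - N*(L-u0))^2 * (z - N*(L-u1)))
     = (1-b)*w^3 + ((b-1)*(2*u0+u1))*w^2 + (-(b-1)*(u0^2 + 2*u0*u1))*w + (b-1)*u0^2*u1"
    unfolding z using N by (simp add: field_simps) (simp add: algebra_simps power2_eq_square power3_eq_cube)
  show ?thesis unfolding lhs rhs i1 i2 i3 by (simp add: algebra_simps)
qed

lemma detA1_val:
  fixes N b sc a :: complex
  assumes N: "N \<noteq> 0" and sc: "sc = 1 + 1/N" and a: "a = b/N^2"
  shows "(1 - sc) * (-sc * (2 - sc) - (a - 1)) = (b-1)/N^3"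
  unfolding sc a using N by (simp add: field_simps) (simp add: algebra_simps eval_nat_numeral)

definition "F1 N x Y h b = -b + h*(1+b-N) + 4*b*Y + (3-b-N)*Y^2 + (2*N-4*b)*x*h + 4*b*x*Y
   + (6-6*b)*x*Y^2 + (b+N-3)*x^2*h + (2*b-2)*x^3*h" for N x Y h b :: real
definition "F2 N x Y h b = (2*b-N)*h + (2*N-4*b)*Y*h + 2*b*Y^2 + (2-2*b)*Y^3 - 4*b*x*h
   + (2*b+2*N-6)*x*Y*h - 2*b*x^2*h + (6*b-6)*x^2*Y*h" for N x Y h b :: real
definition "G3 N x Y b = (2*b-N) + 2*(N-2*b)*Y - 4*b*x + 6*(b-1)*x*Y" for N x Y b :: real
definition "Ep N x Y h b = (h*x^2 - Y^2)*(2*b - 2*b*x + 2*x - N) - 2*x*Y*(2*b - 2*b*Y + 2*Y)" for N x Y h b :: real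

lemma cplx_ident:
  fixes N b x Y s :: real
  defines "U \<equiv> Complex (s*x) Y" and "SL \<equiv> Complex s 1"
  defines "Vp \<equiv> 2 * of_real b*(SL - U) + 2*U - of_real s * of_real N"
  shows "- (of_real b - 1) * of_real s * U^2 - 2 * of_real s * U * Vp - U^2 * Vp
          + of_real b * of_real s * SL^2 - of_real N * of_real s^2 * SL + of_real s^3
         = Complex (s * F1 N x Y (s^2) b) (F2 N x Y (s^2) b)"
   and "U^2 * Vp = Complex (s * Ep N x Y (s^2) b) (s^2 * G3 N x Y b - F2 N x Y (s^2) b)"
  unfolding U_def SL_def Vp_def F1_def F2_def G3_def Ep_def
  by (simp_all add: complex_eq_iff algebra_simps power2_eq_square power3_eq_cube)

lemma sol_relations:
  fixes N b x Y s :: real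
  assumes s: "s \<noteq> 0" and b1: "b \<noteq> 1"
    and e1: "F1 N x Y (s^2) b = 0" and e2: "F2 N x Y (s^2) b = 0" and e3: "G3 N x Y b = 0"
  defines "u0 \<equiv> Complex x (Y/s)" and "L \<equiv> Complex 1 (1/s)"
  defines "V \<equiv> 2 * of_real b * (L - u0) + 2 * u0 - of_real N"
  defines "u1 \<equiv> V / (of_real b - 1)" and "e \<equiv> u0^2 * V"
  shows "(of_real b - 1) * (2*u0 + u1) = 2 * of_real b * L - of_real N"
    and "-(of_real b - 1) * (u0^2 + 2*u0*u1) = - of_real b * L^2 + of_real N * L - 1 + e"
    and "(of_real b - 1) * u0^2 * u1 = e"
    and "e = of_real (Ep N x Y (s^2) b / s^2)"
proof -
  have b1': "(of_real b :: complex) - 1 \<noteq> 0" using b1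
    by (metis of_real_1 of_real_eq_iff right_minus_eq)
  have s': "(of_real s :: complex) \<noteq> 0" using s by simp
  have U: "Complex (s*x) Y = of_real s * u0" unfolding u0_def using s
    by (simp add: complex_eq_iff)
  have SL: "Complex s 1 = of_real s * L" unfolding L_def using s
    by (simp add: complex_eq_iff)
  have C0: "\<And>r. Complex r 0 = of_real r" by (simp add: complex_eq_iff)
  note ci = cplx_ident[where N=N and b=b and x=x and Y=Y and s=s, unfolded U SL]
  have "(of_real s)^3 * (-(of_real b - 1) * u0^2 - 2*u0*V - u0^2*V + of_real b * L^2 - of_real N * L + 1) = 0"
    using ci(1) unfolding e1 e2 V_def C0 by (simp add: algebra_simps power2_eq_square power3_eq_cube)
  then have R: "-(of_real b - 1) * u0^2 - 2*u0*V - u0^2*V + of_real b * L^2 - of_real N * L + 1 = 0"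
    using s' by simp
  have u1V: "(of_real b - 1) * u1 = V" unfolding u1_def using b1' by simp
  show "(of_real b - 1) * (2*u0 + u1) = 2 * of_real b * L - of_real N"
    using u1V unfolding V_def by (simp add: algebra_simps)
  show "(of_real b - 1) * u0^2 * u1 = e" unfolding e_def u1V[symmetric] by (simp add: algebra_simps)
  have d1: "-(of_real b - 1) * (u0^2 + 2*u0*u1) = -(of_real b - 1) * u0^2 - 2*u0*V"
    unfolding u1V[symmetric] by (simp add: algebra_simps)
  have d2: "(-(of_real b - 1) * u0^2 - 2*u0*V) - (- of_real b * L^2 + of_real N * L - 1 + u0^2*V)
     = -(of_real b - 1) * u0^2 - 2*u0*V - u0^2*V + of_real b * L^2 - of_real N * L + 1"
    by (simp add: algebra_simps)
  show "-(of_real b - 1) * (u0^2 + 2*u0*u1) = - of_real b * L^2 + of_real N * L - 1 + e"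
  proof -
    have d3: "(-(of_real b - 1) * u0^2 - 2*u0*V) - (- of_real b * L^2 + of_real N * L - 1 + u0^2*V) = 0"
      by (subst d2) (rule R)
    then show ?thesis unfolding d1 e_def by (simp only: right_minus_eq)
  qed
  have "(of_real s)^3 * e = (of_real s * u0)^2 * (of_real s * V)"
    unfolding e_def by (simp add: algebra_simps power2_eq_square power3_eq_cube)
  also have "of_real s * V = 2 * of_real b * (of_real s * L - of_real s * u0) + 2 * (of_real s * u0) - of_real s * of_real N"
    unfolding V_def by (simp add: algebra_simps)
  also have "(of_real s * u0)^2 * (2 * of_real b * (of_real s * L - of_real s * u0) + 2 * (of_real s * u0) - of_real s * of_real N)
      = Complex (s * Ep N x Y (s^2) b) (s^2 * G3 N x Y b - F2 N x Y (s^2) b)"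
    by (rule ci(2))
  also have "\<dots> = of_real (s * Ep N x Y (s^2) b)" unfolding e2 e3 by (simp add: C0)
  finally have "(of_real s)^3 * e = of_real (s * Ep N x Y (s^2) b)" .
  then show "e = of_real (Ep N x Y (s^2) b / s^2)"
    using s' s by (simp add: field_simps power2_eq_square power3_eq_cube)
qed

definition "Phi N w = (case w of (x, Y, h, b) \<Rightarrow> (F1 N x Y h b, F2 N x Y h b, G3 N x Y b, b))"
  for N :: real and w :: "real \<times> real \<times> real \<times> real"

lemma Phi_alt: "Phi N w = (F1 N (fst w) (fst (snd w)) (fst (snd (snd w))) (snd (snd (snd w))),
   F2 N (fst w) (fst (snd w)) (fst (snd (snd w))) (snd (snd (snd w))),
   G3 N (fst w) (fst (snd w)) (snd (snd (snd w))), snd (snd (snd w)))"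
  by (simp add: Phi_def split: prod.split)

definition "DPhi N w v = (case w of (x, Y, h, b) \<Rightarrow> case v of (vx, vY, vh, vb) \<Rightarrow>
  ( ((2*N-4*b)*h + 4*b*Y + (6-6*b)*Y^2 + 2*(b+N-3)*x*h + 3*(2*b-2)*x^2*h) * vx
   + (4*b + 2*(3-b-N)*Y + 4*b*x + 2*(6-6*b)*x*Y) * vY
   + ((1+b-N) + (2*N-4*b)*x + (b+N-3)*x^2 + (2*b-2)*x^3) * vh
   + (-1 + h + 4*Y - Y^2 - 4*x*h + 4*x*Y - 6*x*Y^2 + x^2*h + 2*x^3*h) * vb,
    (-4*b*h + (2*b+2*N-6)*Y*h - 4*b*x*h + 2*(6*b-6)*x*Y*h) * vx
   + ((2*N-4*b)*h + 4*b*Y + 3*(2-2*b)*Y^2 + (2*b+2*N-6)*x*h + (6*b-6)*x^2*h) * vY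
   + ((2*b-N) + (2*N-4*b)*Y - 4*b*x + (2*b+2*N-6)*x*Y - 2*b*x^2 + (6*b-6)*x^2*Y) * vh
   + (2*h - 4*Y*h + 2*Y^2 - 2*Y^3 - 4*x*h + 2*x*Y*h - 2*x^2*h + 6*x^2*Y*h) * vb,
    (-4*b + 6*(b-1)*Y) * vx + (2*(N-2*b) + 6*(b-1)*x) * vY + (2 - 4*Y - 4*x + 6*x*Y) * vb,
    vb))"
  for N :: real and w v :: "real \<times> real \<times> real \<times> real"

lemma DPhi_alt: "DPhi N w = (\<lambda>v. DPhi N w v)" by simp

lemma Phi_deriv: "(Phi N has_derivative DPhi N w) (at w)"
proof -
  obtain x Y h b where w: "w = (x, Y, h, b)" by (metis prod.exhaust)
  show ?thesis
    unfolding Phi_alt[abs_def] w F1_def F2_def G3_def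
    apply (rule has_derivative_eq_rhs)
     apply (rule derivative_intros)+
    apply (simp add: fun_eq_iff DPhi_def F1_def F2_def G3_def split: prod.split)
    apply (simp add: algebra_simps power2_eq_square power3_eq_cube)
    done
qed

definition "w0 N = (N/(2*(N-1)), (N-1)/(N-2), 0::real, N-1)" for N :: real

lemma w0_rt: assumes "N > 2" obtains r t where "r*(N-1) = 1" "t*(N-2) = 1" "w0 N = (N*r/2, (N-1)*t, 0, N-1)"
proof -
  have "N - 1 \<noteq> 0" "N - 2 \<noteq> 0" using assms by auto
  then show ?thesis using that[of "1/(N-1)" "1/(N-2)"] unfolding w0_def by simp
qed

lemma Phi_w0: assumes "N > 2" shows "Phi N (w0 N) = (0, 0, 0, N-1)"
proof -
  obtain r t where rt: "r*(N-1) = 1" "t*(N-2) = 1" "w0 N = (N*r/2, (N-1)*t, 0, N-1)"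
    using w0_rt[OF assms] by blast
  have "F1 N (N*r/2) ((N-1)*t) 0 (N-1) = 0" using rt(1,2) unfolding F1_def by algebra
  moreover have "F2 N (N*r/2) ((N-1)*t) 0 (N-1) = 0" using rt(1,2) unfolding F2_def by algebra
  moreover have "G3 N (N*r/2) ((N-1)*t) (N-1) = 0" using rt(1,2) unfolding G3_def by algebra
  ultimately show ?thesis unfolding rt(3) Phi_def by simp
qed

lemma DPhi_w0:
  assumes "r*(N-1) = 1" "t*(N-2) = 1"
  shows "DPhi N (N*r/2, (N-1)*t, 0, N-1) (vx, vY, vh, 0) =
    ((-2*(N-1)^2*t) * vx + (-4*N) * vY + ((N-2)*N*(6*N-4-N^2)*r^3/4) * vh,
     (-2*(N-1)^2*t) * vY + (N*r) * vh,
     (2*(N-1)) * vx + ((N-2)*(N+2)*r) * vY, 0)"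
proof -
  have e1: "((2*N-4*(N-1))*0 + 4*(N-1)*((N-1)*t) + (6-6*(N-1))*((N-1)*t)^2 + 2*((N-1)+N-3)*(N*r/2)*0 + 3*(2*(N-1)-2)*(N*r/2)^2*0) = -2*(N-1)^2*t"
    using assms by algebra
  have e2: "(4*(N-1) + 2*(3-(N-1)-N)*((N-1)*t) + 4*(N-1)*(N*r/2) + 2*(6-6*(N-1))*(N*r/2)*((N-1)*t)) = -4*N"
    using assms by algebra
  have e3: "((1+(N-1)-N) + (2*N-4*(N-1))*(N*r/2) + ((N-1)+N-3)*(N*r/2)^2 + (2*(N-1)-2)*(N*r/2)^3) = (N-2)*N*(6*N-4-N^2)*r^3/4"
  proof -
    define x0 where "x0 = N*r/2"
    have hx: "2*x0 = N*r" unfolding x0_def by simp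
    have "4*((1+(N-1)-N) + (2*N-4*(N-1))*x0 + ((N-1)+N-3)*x0^2 + (2*(N-1)-2)*x0^3) = (N-2)*N*(6*N-4-N^2)*r^3"
      using assms(1) hx by algebra
    then show ?thesis unfolding x0_def[symmetric] by simp
  qed
  have e4: "((2*N-4*(N-1))*0 + 4*(N-1)*((N-1)*t) + 3*(2-2*(N-1))*((N-1)*t)^2 + (2*(N-1)+2*N-6)*(N*r/2)*0 + (6*(N-1)-6)*(N*r/2)^2*0) = -2*(N-1)^2*t"
    using assms by algebra
  have e5: "((2*(N-1)-N) + (2*N-4*(N-1))*((N-1)*t) - 4*(N-1)*(N*r/2) + (2*(N-1)+2*N-6)*(N*r/2)*((N-1)*t) - 2*(N-1)*(N*r/2)^2 + (6*(N-1)-6)*(N*r/2)^2*((N-1)*t)) = N*r"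
  proof -
    define x0 where "x0 = N*r/2"
    have hx: "2*x0 = N*r" unfolding x0_def by simp
    have "((2*(N-1)-N) + (2*N-4*(N-1))*((N-1)*t) - 4*(N-1)*x0 + (2*(N-1)+2*N-6)*x0*((N-1)*t) - 2*(N-1)*x0^2 + (6*(N-1)-6)*x0^2*((N-1)*t)) = N*r"
      using assms hx by algebra
    then show ?thesis unfolding x0_def[symmetric] by simp
  qed
  have e6: "(-4*(N-1) + 6*((N-1)-1)*((N-1)*t)) = 2*(N-1)"
    using assms by algebra
  have e7: "(2*(N-2*(N-1)) + 6*((N-1)-1)*(N*r/2)) = (N-2)*(N+2)*r"
    using assms by algebra
  show ?thesis unfolding DPhi_def
    apply (simp only: prod.case)
    apply (simp only: e1 e2 e3 e4 e5 e6 e7)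
    apply simp
    done
qed

lemma DPhi_kernel:
  assumes N: "N > 2" and rt: "r*(N-1) = 1" "t*(N-2) = 1"
    and z: "DPhi N (N*r/2, (N-1)*t, 0, N-1) v = 0"
  shows "v = 0"
proof -
  obtain vx vY vh vb where v: "v = (vx, vY, vh, vb)" by (metis prod.exhaust)
  have vb: "vb = 0" using z unfolding v DPhi_def by (simp add: zero_prod_def)
  define a11 where "a11 = -2*(N-1)^2*t"
  define a12 where "a12 = -4*N"
  define a13 where "a13 = (N-2)*N*(6*N-4-N^2)*r^3/4"
  define a22 where "a22 = -2*(N-1)^2*t"
  define a23 where "a23 = N*r"
  define a31 where "a31 = 2*(N-1)"
  define a32 where "a32 = (N-2)*(N+2)*r"
  have eqs: "a11* vx + a12* vY + a13* vh = 0" "a22* vY + a23* vh = 0" "a31* vx + a32* vY = 0"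
    using z DPhi_w0[OF rt, of vx vY vh] unfolding v vb a11_def a12_def a13_def a22_def a23_def a31_def a32_def
    by (simp_all add: zero_prod_def)
  have D: "a23*a31*a12 - a13*a31*a22 - a11*a23*a32 = -(N^3)"
    using rt unfolding a11_def a12_def a13_def a22_def a23_def a31_def a32_def by algebra
  have "vY * (a23*a31*a12 - a13*a31*a22 - a11*a23*a32)
      = a23*a31*(a11* vx + a12* vY + a13* vh) - a13*a31*(a22* vY + a23* vh) - a11*a23*(a31* vx + a32* vY)"
    by (simp add: algebra_simps)
  then have "vY * (-(N^3)) = 0" unfolding D eqs by simp
  then have vY: "vY = 0" using N by simp
  have "r \<noteq> 0" using rt by auto
  then have "a31 \<noteq> 0" "a23 \<noteq> 0" using N unfolding a31_def a23_def by auto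
  then have "vx = 0" "vh = 0" using eqs vY by auto
  then show ?thesis unfolding v using vY vb by (simp add: zero_prod_def)
qed

lemma dist4: "dist (0::real, 0::real, 0::real, x) (0, 0, 0, y) = \<bar>y - x\<bar>"
  by (simp add: dist_Pair_Pair dist_real_def)

lemma phi_open:
  assumes N: "N > 2" and r: "r > 0"
  shows "\<exists>\<epsilon>>0. \<forall>b. \<bar>b - (N-1)\<bar> < \<epsilon> \<longrightarrow> (\<exists>w. dist w (w0 N) < r \<and> Phi N w = (0,0,0,b))"
proof -
  obtain rr t where rt: "rr*(N-1) = 1" "t*(N-2) = 1" "w0 N = (N*rr/2, (N-1)*t, 0, N-1)"
    using w0_rt[OF N] by blast
  let ?D = "DPhi N (w0 N)"
  have der: "(Phi N has_derivative ?D) (at (w0 N))" by (rule Phi_deriv)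
  have bl: "bounded_linear ?D" using der by (rule has_derivative_bounded_linear)
  then have lin: "linear ?D" by (rule bounded_linear.linear)
  have "inj ?D" unfolding linear_injective_0[OF lin]
  proof (intro allI impI)
    fix v assume "?D v = 0"
    then show "v = 0" using DPhi_kernel[OF N rt(1,2), of v] unfolding rt(3) by simp
  qed
  then have "surj ?D" by (rule eucl.linear_injective_imp_surjective[OF lin]) (rule refl)
  then obtain g where g: "linear g" "?D \<circ> g = id"
    using real_vector.linear_surjective_right_inverse[OF lin] by blast
  have bg: "bounded_linear g" using g(1) linear_conv_bounded_linear by blast
  have cont: "continuous_on UNIV (Phi N)"
  proof (rule continuous_at_imp_continuous_on, rule ballI)
    fix w :: "real \<times> real \<times> real \<times> real"
    show "isCont (Phi N) w" using Phi_deriv[of N w] by (rule has_derivative_continuous)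
  qed
  have "Phi N (w0 N) \<in> interior (Phi N ` ball (w0 N) r)"
  proof (rule sussmann_open_mapping[OF open_UNIV cont _ der bg g(2)])
    show "w0 N \<in> UNIV" by simp
    show "ball (w0 N) r \<subseteq> UNIV" by simp
    show "w0 N \<in> interior (ball (w0 N) r)" using r by simp
  qed
  then obtain \<epsilon> where e: "\<epsilon> > 0" "ball (Phi N (w0 N)) \<epsilon> \<subseteq> Phi N ` ball (w0 N) r"
    unfolding mem_interior by blast
  show ?thesis
  proof (intro exI[of _ \<epsilon>] conjI allI impI)
    show "\<epsilon> > 0" by (rule e(1))
    fix b assume b: "\<bar>b - (N-1)\<bar> < \<epsilon>"
    have dd: "dist (Phi N (w0 N)) (0::real,0::real,0::real,b) = \<bar>b - (N-1)\<bar>"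
      unfolding Phi_w0[OF N] by (rule dist4)
    have "(0::real,0::real,0::real,b) \<in> Phi N ` ball (w0 N) r"
      by (rule subsetD[OF e(2)]) (simp only: mem_ball dd b)
    then obtain w where "w \<in> ball (w0 N) r" "(0,0,0,b) = Phi N w" by (rule imageE)
    then show "\<exists>w. dist w (w0 N) < r \<and> Phi N w = (0,0,0,b)"
      by (intro exI[of _ w]) (simp add: dist_commute)
  qed
qed

definition "Qf N x Y h b = 2*(b-1)^2*Y^2*((1+b-N) + (2*N-4*b)*x + (b+N-3)*x^2 + (2*b-2)*x^3)
   + ((b-1)*(6*b-N) + (3-5*b+N)*((b-1)*Y + b))
     * ((2*b-N) + (2*N-4*b)*Y - 4*b*x + (2*b+2*N-6)*x*Y - 2*b*x^2 + (6*b-6)*x^2*Y)"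
  for N x Y h b :: real

definition "ordf N x b = x*(3*b-3) - (2*b-N)" for N x b :: real

lemma Q_ident:
  "2*(b-1)^2*Y^2*(F1 N x Y h b + Y * G3 N x Y b) + ((b-1)*(6*b-N) + (3-5*b+N)*((b-1)*Y + b)) * F2 N x Y h b
   = 2*b*Y^2*(N-1-b) + h * Qf N x Y h b"
  unfolding F1_def F2_def G3_def Qf_def by (simp add: algebra_simps power2_eq_square power3_eq_cube)

lemma base_vals:
  assumes N: "N > 2"
  shows "Qf N (fst (w0 N)) (fst (snd (w0 N))) 0 (N-1) = -(N^3*(N-2)/(2*(N-1)))"
    and "Ep N (fst (w0 N)) (fst (snd (w0 N))) 0 (N-1) > 0"
    and "ordf N (fst (w0 N)) (N-1) > 0"
    and "fst (snd (w0 N)) > 0"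
proof -
  obtain r t where rt: "r*(N-1) = 1" "t*(N-2) = 1" "w0 N = (N*r/2, (N-1)*t, 0, N-1)"
    using w0_rt[OF N] by blast
  have r: "r = 1/(N-1)" "t = 1/(N-2)" using rt(1,2) N by (auto simp: field_simps)
  have rp: "r > 0" "t > 0" using N unfolding r by auto
  have "Qf N (N*r/2) ((N-1)*t) 0 (N-1) = -(N^3*(N-2)*r/2)"
  proof -
    define x0 where "x0 = N*r/2"
    have hx: "2*x0 = N*r" unfolding x0_def by simp
    have "2 * Qf N x0 ((N-1)*t) 0 (N-1) = -(N^3*(N-2)*r)"
      using rt(1,2) hx unfolding Qf_def by algebra
    then show ?thesis unfolding x0_def[symmetric] by simp
  qed
  then show "Qf N (fst (w0 N)) (fst (snd (w0 N))) 0 (N-1) = -(N^3*(N-2)/(2*(N-1)))"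
    unfolding rt(3) r by simp
  have "Ep N (N*r/2) ((N-1)*t) 0 (N-1) = ((N-1)*t)^2 * (N-2) * r"
  proof -
    define x0 where "x0 = N*r/2"
    have hx: "2*x0 = N*r" unfolding x0_def by simp
    have "Ep N x0 ((N-1)*t) 0 (N-1) = ((N-1)*t)^2 * (N-2) * r"
      using rt(1,2) hx unfolding Ep_def by algebra
    then show ?thesis unfolding x0_def[symmetric] by simp
  qed
  moreover have "((N-1)*t)^2 * (N-2) * r > 0" using N rp by simp
  ultimately show "Ep N (fst (w0 N)) (fst (snd (w0 N))) 0 (N-1) > 0" unfolding rt(3) by simp
  have "ordf N (N*r/2) (N-1) = (N-2)*(N+2)*r/2"
  proof -
    define x0 where "x0 = N*r/2"
    have hx: "2*x0 = N*r" unfolding x0_def by simp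
    have "2 * ordf N x0 (N-1) = (N-2)*(N+2)*r"
      using rt(1,2) hx unfolding ordf_def by algebra
    then show ?thesis unfolding x0_def[symmetric] by simp
  qed
  moreover have "(N-2)*(N+2)*r/2 > 0" using N rp by simp
  ultimately show "ordf N (fst (w0 N)) (N-1) > 0" unfolding rt(3) by simp
  show "fst (snd (w0 N)) > 0" unfolding rt(3) using N rp by simp
qed

lemma nbhd:
  assumes N: "N > 2"
  defines "Q0 \<equiv> Qf N (fst (w0 N)) (fst (snd (w0 N))) 0 (N-1)"
      and "E0 \<equiv> Ep N (fst (w0 N)) (fst (snd (w0 N))) 0 (N-1)"
      and "Y0 \<equiv> fst (snd (w0 N))"
  obtains r where "r > 0" and "\<And>w. dist w (w0 N) < r \<Longrightarrow>
      Qf N (fst w) (fst (snd w)) (fst (snd (snd w))) (snd (snd (snd w))) < Q0/2 \<and>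
      E0/2 < Ep N (fst w) (fst (snd w)) (fst (snd (snd w))) (snd (snd (snd w))) \<and>
      0 < ordf N (fst w) (snd (snd (snd w))) \<and>
      0 < fst (snd w) \<and> fst (snd w) < Y0 + 1 \<and> 1 < snd (snd (snd w))"
proof -
  let ?S = "{w :: real \<times> real \<times> real \<times> real.
      Qf N (fst w) (fst (snd w)) (fst (snd (snd w))) (snd (snd (snd w))) < Q0/2 \<and>
      E0/2 < Ep N (fst w) (fst (snd w)) (fst (snd (snd w))) (snd (snd (snd w))) \<and>
      0 < ordf N (fst w) (snd (snd (snd w))) \<and>
      0 < fst (snd w) \<and> fst (snd w) < Y0 + 1 \<and> 1 < snd (snd (snd w))}"
  have op: "open ?S"
    unfolding Qf_def Ep_def ordf_def
    by (intro open_Collect_conj open_Collect_less continuous_intros)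
  have bv: "Q0 < 0" "E0 > 0" "ordf N (fst (w0 N)) (N-1) > 0" "Y0 > 0"
    using base_vals[OF N] N unfolding Q0_def E0_def Y0_def by auto
  have w0c: "fst (snd (snd (w0 N))) = 0" "snd (snd (snd (w0 N))) = N - 1"
    unfolding w0_def by auto
  have "w0 N \<in> ?S" using bv N by (simp add: w0c Q0_def E0_def Y0_def)
  then obtain r where "r > 0" "ball (w0 N) r \<subseteq> ?S"
    using op open_contains_ball by blast
  then show ?thesis using that by (auto simp: dist_commute subset_iff)
qed

lemma sv_s_N: assumes "\<nu> > 0" shows "sv_s \<nu> = 1 + 1/(\<nu>^2+\<nu>)"
proof -
  have "\<nu> + \<nu>*\<nu> > 0" "\<nu>*\<nu> + \<nu> > 0" using assms by (simp_all add: add_pos_pos)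
  then show ?thesis unfolding sv_s_def by (simp add: field_simps power2_eq_square)
qed

lemma double_from_sol:
  fixes \<nu> F x Y h b \<sigma>1 \<sigma>2 :: real
  assumes nu: "\<nu> > 1" and Ndef: "N = \<nu>^2 + \<nu>" and Fp: "F > 0" and bdef: "b = N^2/F^2"
    and b1: "b > 1" and hp: "h > 0"
    and e1: "F1 N x Y h b = 0" and e2: "F2 N x Y h b = 0" and e3: "G3 N x Y b = 0"
    and Epos: "Ep N x Y h b > 0" and ordp: "ordf N x b > 0"
    and s1: "\<sigma>1 \<in> {-1, 1}" and s2: "\<sigma>2 \<in> {-1, 1}"
  shows "double_lowest_eigenvalue
     (sv_G \<nu> F (\<i> * complex_of_real (\<sigma>1 * (1 / sqrt h))) (\<sigma>2 * (F * sqrt (Ep N x Y h b / h))))"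
proof -
  have Npos: "N > 0" using nu unfolding Ndef by (simp add: add_pos_pos)
  define s where "s = \<sigma>1 * sqrt h"
  have s1sq: "\<sigma>1 * \<sigma>1 = 1" using s1 by auto
  have s2sq: "\<sigma>2 * \<sigma>2 = 1" using s2 by auto
  have s1p: "\<sigma>1^2 = 1" using s1 by auto
  have ssq: "s^2 = h" unfolding s_def power_mult_distrib s1p using hp by simp
  have snz: "s \<noteq> 0" unfolding s_def using hp s1 by auto
  have b1': "b \<noteq> 1" using b1 by simp
  have e1': "F1 N x Y (s^2) b = 0" and e2': "F2 N x Y (s^2) b = 0" using e1 e2 ssq by simp_all
  define u0 where "u0 = Complex x (Y/s)"
  define L where "L = Complex 1 (1/s)"
  define V where "V = 2 * of_real b * (L - u0) + 2 * u0 - (of_real N :: complex)"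
  define u1 where "u1 = V / (of_real b - 1)"
  define e where "e = u0^2 * V"
  have rel1: "(of_real b - 1) * (2*u0 + u1) = 2 * of_real b * L - of_real N"
    unfolding u1_def V_def u0_def L_def by (rule sol_relations(1)[OF snz b1' e1' e2' e3])
  have rel2: "-(of_real b - 1) * (u0^2 + 2*u0*u1) = - of_real b * L^2 + of_real N * L - 1 + e"
    unfolding e_def u1_def V_def u0_def L_def by (rule sol_relations(2)[OF snz b1' e1' e2' e3])
  have rel3: "(of_real b - 1) * u0^2 * u1 = e"
    unfolding e_def u1_def V_def u0_def L_def by (rule sol_relations(3)[OF snz b1' e1' e2' e3])
  have rel4: "e = of_real (Ep N x Y (s^2) b / s^2)"
    unfolding e_def u1_def V_def u0_def L_def by (rule sol_relations(4)[OF snz b1' e1' e2' e3])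
  have eval: "e = of_real (Ep N x Y h b / h)" using rel4 ssq by simp
  define lam where "lam = \<i> * complex_of_real (\<sigma>1 * (1 / sqrt h))"
  define \<eta>0 where "\<eta>0 = F * sqrt (Ep N x Y h b / h)"
  define k where "k = \<i> * complex_of_real (\<sigma>2 * \<eta>0)"
  define sc where "sc = complex_of_real (sv_s \<nu>)"
  define a where "a = complex_of_real (1/F^2)"
  have inv_s: "1/s = \<sigma>1 * (1 / sqrt h)" unfolding s_def using s1 by auto
  have lamL: "lam = L - 1" unfolding lam_def L_def inv_s[symmetric] by (simp add: complex_eq_iff)
  have Nc: "(of_real N :: complex) \<noteq> 0" using Npos by simp
  have sc: "sc = 1 + 1 / of_real N" unfolding sc_def sv_s_N[OF order.strict_trans[OF zero_less_one nu]] Ndef by simp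
  have a: "a = of_real b / (of_real N)^2" unfolding a_def bdef using Npos by (simp add: field_simps)
  have "\<eta>0^2 = F^2 * (Ep N x Y h b / h)" unfolding \<eta>0_def using Epos hp
    by (simp add: power_mult_distrib)
  moreover have "(\<sigma>2*\<eta>0)^2 = \<eta>0^2"
    by (metis mult_1 power_mult_distrib s2sq power2_eq_square)
  ultimately have r1: "(\<sigma>2*\<eta>0)^2 * (1/F^2) = Ep N x Y h b / h"
    using Fp by simp
  have "k^2 * a = - complex_of_real ((\<sigma>2*\<eta>0)^2 * (1/F^2))"
    unfolding k_def a_def by (simp add: power_mult_distrib)
  then have ka: "k^2 * a = - e" unfolding r1 eval .
  have pf: "\<And>z. ((1-sc)*z + 1 + lam) * ((-sc*z + lam)*((2-sc)*z + 2 + lam) - z*((a-1)*z - 3)) - k^2 * a * (((1-sc)*z + 1 + lam)+1)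
       = ((of_real b - 1)/(of_real N)^3) * ((z - of_real N*(L-u0))^2 * (z - of_real N*(L-u1)))"
    by (rule poly_fact[OF Nc sc a ka lamL rel1 rel2 rel3])
  have dA: "det (sv_A1 \<nu> F 1 1) = (of_real b - 1)/(of_real N)^3"
    unfolding det_A1' sc_def[symmetric] a_def[symmetric] by (rule detA1_val[OF Nc sc a])
  have dAnz: "det (sv_A1 \<nu> F 1 1) \<noteq> 0" unfolding dA using Nc b1'
    by (metis divide_eq_0_iff of_real_1 of_real_diff of_real_eq_0_iff power_not_zero right_minus_eq)
  have cf: "\<And>z. char_fun (sv_G \<nu> F lam (\<sigma>2 * \<eta>0)) z = (z - of_real N*(L-u0))^2 * (z - of_real N*(L-u1))"
  proof -
    fix z
    have "char_fun (sv_G \<nu> F lam (\<sigma>2 * \<eta>0)) z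
      = det (mat z ** sv_A1 \<nu> F 1 1 - (sv_E 1 1 - mat lam - mat k ** sv_A2 F 1 1)) / det (sv_A1 \<nu> F 1 1)"
      unfolding k_def by (rule char_fun_G[OF dAnz])
    also have "\<dots> = (z - of_real N*(L-u0))^2 * (z - of_real N*(L-u1))"
      unfolding det_M sc_def[symmetric] a_def[symmetric] pf dA using dAnz dA by simp
    finally show "char_fun (sv_G \<nu> F lam (\<sigma>2 * \<eta>0)) z = (z - of_real N*(L-u0))^2 * (z - of_real N*(L-u1))" .
  qed
  have ReV: "Re V = 2*b*(1 - x) + 2*x - N" unfolding V_def L_def u0_def by simp
  have Reu1: "Re u1 = Re V / (b - 1)" unfolding u1_def
    by (metis Re_divide_of_real of_real_1 of_real_diff)
  have "x > Re u1" unfolding Reu1 ReV using ordp b1 unfolding ordf_def by (simp add: field_simps)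
  then have "Re (of_real N*(L-u0)) < Re (of_real N*(L-u1))"
    using Npos unfolding L_def u0_def by simp
  then show ?thesis unfolding double_lowest_eigenvalue_def lam_def[symmetric] \<eta>0_def[symmetric]
    using cf by blast
qed

lemma lim_helper:
  fixes g :: "real \<Rightarrow> real"
  assumes d: "\<delta> > 0" and c: "c > 0" and C: "C > 0"
    and lb: "\<And>F. a < F \<Longrightarrow> F < a + \<delta> \<Longrightarrow> c / sqrt (C*(F - a)) \<le> g F"
  shows "filterlim g at_top (at_right a)"
  unfolding filterlim_at_top
proof
  fix Z :: real
  define M where "M = max Z 1"
  have M: "M > 0" "Z \<le> M" unfolding M_def by auto
  define bb where "bb = a + min \<delta> (c^2/(C*M^2))"
  have "c^2/(C*M^2) > 0" using c C M by simp
  then have bb: "bb > a" unfolding bb_def using d by simp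
  show "eventually (\<lambda>x. Z \<le> g x) (at_right a)"
    unfolding eventually_at_right_field
  proof (intro exI[of _ bb] conjI allI impI)
    show "a < bb" by (rule bb)
    fix y assume y: "a < y" "y < bb"
    have y\<delta>: "y < a + \<delta>" using y unfolding bb_def by simp
    have "y - a < c^2/(C*M^2)" using y unfolding bb_def by simp
    then have "C*(y - a) < C*(c^2/(C*M^2))" using C by (rule mult_strict_left_mono)
    also have "C*(c^2/(C*M^2)) = c^2/M^2" using C by simp
    finally have "C*(y - a) < c^2/M^2" .
    then have "sqrt (C*(y-a)) < sqrt (c^2/M^2)" by (rule real_sqrt_less_mono)
    also have "sqrt (c^2/M^2) = c/M" using c M by (simp add: real_sqrt_divide)
    finally have s1: "sqrt (C*(y-a)) < c/M" .
    have s0: "sqrt (C*(y-a)) > 0" using C y by simp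
    have "M < c / sqrt (C*(y-a))" using s1 s0 M c by (simp add: field_simps)
    also have "\<dots> \<le> g y" using lb y(1) y\<delta> .
    finally show "Z \<le> g y" using M by simp
  qed
qed

theorem mainTheorem7:
  fixes \<nu> :: real
  assumes "\<nu> > 1"
  defines "F2d \<equiv> \<nu> * (\<nu> + 1) / sqrt (\<nu>^2 + \<nu> - 1)"
  shows "\<exists>\<delta>>0. \<exists>\<eta> \<tau>_star :: real \<Rightarrow> real.
           (\<forall>F\<in>{F2d<..<F2d+\<delta>}. \<eta> F > 0 \<and> \<tau>_star F > 0) \<and>
           filterlim \<eta> at_top (at_right F2d) \<and>
           filterlim \<tau>_star at_top (at_right F2d) \<and>
           (\<forall>F\<in>{F2d<..<F2d+\<delta>}. \<forall>\<sigma>1\<in>{-1, 1::real}. \<forall>\<sigma>2\<in>{-1, 1::real}.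
              double_lowest_eigenvalue
                (sv_G \<nu> F (\<i> * complex_of_real (\<sigma>1 * \<tau>_star F)) (\<sigma>2 * \<eta> F)))"
proof -
  define N where "N = \<nu>^2 + \<nu>"
  have nu: "\<nu> > 1" by (rule assms(1))
  have N2: "N > 2" unfolding N_def using nu
    by (smt (verit, best) one_less_power pos2)
  define b0 where "b0 = N - 1"
  have b0p: "b0 > 1" unfolding b0_def using N2 by simp
  have F2d: "F2d = N / sqrt b0" unfolding F2d_def N_def b0_def by (simp add: algebra_simps power2_eq_square)
  have F2dp: "F2d > 0" unfolding F2d using N2 b0p by simp
  have F2dsq: "N^2 / F2d^2 = b0" unfolding F2d using b0p N2 by (simp add: power_divide)
  define Q0 where "Q0 = Qf N (fst (w0 N)) (fst (snd (w0 N))) 0 (N-1)"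
  define E0 where "E0 = Ep N (fst (w0 N)) (fst (snd (w0 N))) 0 (N-1)"
  define Y0 where "Y0 = fst (snd (w0 N))"
  have Q0n: "Q0 < 0" and E0p: "E0 > 0" and Y0p: "Y0 > 0"
    using base_vals[OF N2] N2 unfolding Q0_def E0_def Y0_def by auto
  obtain r where r: "r > 0" and rprop: "\<And>w. dist w (w0 N) < r \<Longrightarrow>
      Qf N (fst w) (fst (snd w)) (fst (snd (snd w))) (snd (snd (snd w))) < Q0/2 \<and>
      E0/2 < Ep N (fst w) (fst (snd w)) (fst (snd (snd w))) (snd (snd (snd w))) \<and>
      0 < ordf N (fst w) (snd (snd (snd w))) \<and>
      0 < fst (snd w) \<and> fst (snd w) < Y0 + 1 \<and> 1 < snd (snd (snd w))"
  proof (rule nbhd[OF N2])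
    fix r assume a1: "r > 0" and a2: "\<And>w. dist w (w0 N) < r \<Longrightarrow>
      Qf N (fst w) (fst (snd w)) (fst (snd (snd w))) (snd (snd (snd w))) < Qf N (fst (w0 N)) (fst (snd (w0 N))) 0 (N-1)/2 \<and>
      Ep N (fst (w0 N)) (fst (snd (w0 N))) 0 (N-1)/2 < Ep N (fst w) (fst (snd w)) (fst (snd (snd w))) (snd (snd (snd w))) \<and>
      0 < ordf N (fst w) (snd (snd (snd w))) \<and>
      0 < fst (snd w) \<and> fst (snd w) < fst (snd (w0 N)) + 1 \<and> 1 < snd (snd (snd w))"
    show thesis
    proof (rule that[OF a1])
      fix w assume "dist w (w0 N) < r"
      then show "Qf N (fst w) (fst (snd w)) (fst (snd (snd w))) (snd (snd (snd w))) < Q0/2 \<and>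
      E0/2 < Ep N (fst w) (fst (snd w)) (fst (snd (snd w))) (snd (snd (snd w))) \<and>
      0 < ordf N (fst w) (snd (snd (snd w))) \<and>
      0 < fst (snd w) \<and> fst (snd w) < Y0 + 1 \<and> 1 < snd (snd (snd w))"
        unfolding Q0_def E0_def Y0_def by (rule a2)
    qed
  qed
  obtain \<epsilon> where ep: "\<epsilon> > 0" and epprop: "\<And>b. \<bar>b - (N-1)\<bar> < \<epsilon> \<Longrightarrow> \<exists>w. dist w (w0 N) < r \<and> Phi N w = (0,0,0,b)"
    using phi_open[OF N2 r] by auto
  define \<epsilon>' where "\<epsilon>' = min \<epsilon> (b0/2)"
  have ep': "\<epsilon>' > 0" "\<epsilon>' \<le> \<epsilon>" "b0 - \<epsilon>' > 0" unfolding \<epsilon>'_def using ep b0p by auto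
  define Fmax where "Fmax = N / sqrt (b0 - \<epsilon>')"
  have "sqrt (b0 - \<epsilon>') < sqrt b0" using ep' by simp
  then have FmaxF: "F2d < Fmax" unfolding Fmax_def F2d using N2 ep' b0p
    by (simp add: divide_strict_left_mono)
  define \<delta> where "\<delta> = Fmax - F2d"
  have dp: "\<delta> > 0" unfolding \<delta>_def using FmaxF by simp
  define bF where "bF F = N^2 / F^2" for F
  have bF_range: "b0 - \<epsilon>' < bF F \<and> bF F < b0" if F: "F2d < F" "F < F2d + \<delta>" for F
  proof -
    have Fp: "F > 0" using F F2dp by simp
    have "F2d^2 < F^2" using F(1) F2dp by (simp add: power_strict_mono)
    then have "N^2 / F^2 < N^2 / F2d^2" using F2dp Fp N2 by (simp add: divide_strict_left_mono)
    then have u: "bF F < b0" unfolding bF_def F2dsq .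
    have "F^2 < Fmax^2" using F(2) Fp unfolding \<delta>_def by (simp add: power_strict_mono)
    then have "N^2 / Fmax^2 < N^2 / F^2" using Fp N2 FmaxF F2dp by (simp add: divide_strict_left_mono)
    moreover have "N^2 / Fmax^2 = b0 - \<epsilon>'" unfolding Fmax_def using ep' N2 by (simp add: power_divide)
    ultimately show ?thesis using u unfolding bF_def by simp
  qed
  define wF where "wF F = (SOME w. dist w (w0 N) < r \<and> Phi N w = (0,0,0,bF F))" for F
  have wF: "dist (wF F) (w0 N) < r \<and> Phi N (wF F) = (0,0,0,bF F)" if F: "F2d < F" "F < F2d + \<delta>" for F
  proof -
    have "\<bar>bF F - (N-1)\<bar> < \<epsilon>" using bF_range[OF F] ep' unfolding b0_def by auto
    then have "\<exists>w. dist w (w0 N) < r \<and> Phi N w = (0,0,0,bF F)" by (rule epprop)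
    then show ?thesis unfolding wF_def by (rule someI_ex)
  qed
  define hF where "hF F = fst (snd (snd (wF F)))" for F
  define xF where "xF F = fst (wF F)" for F
  define YF where "YF F = fst (snd (wF F))" for F
  define \<tau> where "\<tau> F = 1 / sqrt (hF F)" for F
  define \<eta> where "\<eta> F = F * sqrt (Ep N (xF F) (YF F) (hF F) (bF F) / hF F)" for F
  define Kc where "Kc = 2 * b0 * (Y0+1)^2 / (-Q0/2)"
  define K2 where "K2 = N^2 * (2*F2d + \<delta>) / F2d^4"
  have Kc: "Kc > 0"
  proof -
    have "2 * b0 * (Y0+1)^2 > 0" using b0p Y0p by simp
    moreover have "-Q0/2 > 0" using Q0n by simp
    ultimately show ?thesis unfolding Kc_def by (rule divide_pos_pos)
  qed
  have K2: "K2 > 0" unfolding K2_def using N2 F2dp dp by (simp add: add_pos_pos)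
  have key: "hF F > 0 \<and> hF F \<le> Kc * K2 * (F - F2d) \<and> E0/2 < Ep N (xF F) (YF F) (hF F) (bF F) \<and>
      F1 N (xF F) (YF F) (hF F) (bF F) = 0 \<and> F2 N (xF F) (YF F) (hF F) (bF F) = 0 \<and>
      G3 N (xF F) (YF F) (bF F) = 0 \<and> ordf N (xF F) (bF F) > 0 \<and> bF F > 1"
    if F: "F2d < F" "F < F2d + \<delta>" for F
  proof -
    obtain w where wd: "dist w (w0 N) < r" and wP: "Phi N w = (0,0,0,bF F)" and ww: "w = wF F"
      using wF[OF F] by blast
    obtain x Y h b where wc: "w = (x, Y, h, b)" by (metis prod.exhaust)
    have eqs: "F1 N x Y h b = 0" "F2 N x Y h b = 0" "G3 N x Y b = 0" "b = bF F"
      using wP unfolding wc Phi_def by auto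
    have cond: "Qf N x Y h b < Q0/2" "E0/2 < Ep N x Y h b" "0 < ordf N x b" "0 < Y" "Y < Y0 + 1" "1 < b"
      using rprop[OF wd] unfolding wc by simp_all
    have comps: "xF F = x" "YF F = Y" "hF F = h"
      unfolding xF_def YF_def hF_def ww[symmetric] wc by simp_all
    have bb: "b < b0" using bF_range[OF F] eqs(4) by simp
    have id: "2*b*Y^2*(N-1-b) + h * Qf N x Y h b = 0"
      using Q_ident[of b Y N x h] eqs(1-3) by simp
    have nQ: "- Qf N x Y h b > -Q0/2" using cond(1) by simp
    have nQp: "- Qf N x Y h b > 0" using nQ Q0n by simp
    have hid: "h * (- Qf N x Y h b) = 2*b*Y^2*(b0-b)" using id unfolding b0_def by (simp add: algebra_simps)
    have rhsp: "2*b*Y^2*(b0-b) > 0" using cond(4,6) bb by simp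
    have hp: "h > 0" using hid rhsp nQp by (metis zero_less_mult_pos2)
    have "h * (-Q0/2) \<le> h * (- Qf N x Y h b)" using nQ hp by simp
    also have "\<dots> = 2*b*Y^2*(b0-b)" by (rule hid)
    also have "\<dots> \<le> 2*b0*(Y0+1)^2*(b0-b)"
    proof -
      have "Y^2 \<le> (Y0+1)^2" using cond(4,5) by (simp add: power_mono)
      moreover have "b \<le> b0" using bb by simp
      ultimately have "b*Y^2 \<le> b0*(Y0+1)^2" using cond(6) by (simp add: mult_mono)
      then show ?thesis using bb by (simp add: mult_right_mono)
    qed
    finally have h1: "h \<le> Kc * (b0 - b)" unfolding Kc_def using Q0n by (simp add: field_simps)
    have Fp: "F > 0" using F F2dp by simp
    have "b0 - b = N^2 * (F^2 - F2d^2) / (F^2 * F2d^2)"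
      unfolding eqs(4) bF_def F2dsq[symmetric] using Fp F2dp by (simp add: field_simps)
    also have "\<dots> \<le> N^2 * (F^2 - F2d^2) / (F2d^2 * F2d^2)"
    proof (rule divide_left_mono)
      show "0 \<le> N^2 * (F^2 - F2d^2)" using F(1) F2dp by (simp add: power_mono)
      have "F2d^2 \<le> F^2" using F(1) F2dp by (simp add: power_mono)
      then show "F2d^2 * F2d^2 \<le> F^2 * F2d^2" by (rule mult_right_mono) simp
      show "0 < F^2 * F2d^2 * (F2d^2 * F2d^2)" using Fp F2dp by simp
    qed
    also have "\<dots> = N^2 * (F + F2d) / F2d^4 * (F - F2d)"
      using F2dp by (simp add: field_simps power2_eq_square eval_nat_numeral)
    also have "\<dots> \<le> K2 * (F - F2d)"
    proof -
      have "N^2 * (F + F2d) / F2d^4 \<le> K2" unfolding K2_def using F F2dp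
        by (intro divide_right_mono mult_left_mono) auto
      then show ?thesis by (rule mult_right_mono) (use F in simp)
    qed
    finally have "b0 - b \<le> K2 * (F - F2d)" .
    then have "Kc * (b0 - b) \<le> Kc * (K2 * (F - F2d))" using Kc by simp
    then have "h \<le> Kc * K2 * (F - F2d)" using h1 by simp
    then show ?thesis using hp cond eqs comps by simp
  qed
  show ?thesis
  proof (rule exI[of _ \<delta>], rule conjI[OF dp], rule exI[of _ \<eta>], rule exI[of _ \<tau>], intro conjI)
    show "\<forall>F\<in>{F2d<..<F2d + \<delta>}. 0 < \<eta> F \<and> 0 < \<tau> F"
    proof
      fix F assume "F \<in> {F2d<..<F2d + \<delta>}"
      then have F: "F2d < F" "F < F2d + \<delta>" by auto
      note k = key[OF F]
      have "E0/2 > 0" using E0p by simp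
      then show "0 < \<eta> F \<and> 0 < \<tau> F" unfolding \<eta>_def \<tau>_def using k F F2dp by auto
    qed
    show "filterlim \<tau> at_top (at_right F2d)"
    proof (rule lim_helper[OF dp zero_less_one mult_pos_pos[OF Kc K2]])
      fix F assume F: "F2d < F" "F < F2d + \<delta>"
      note k = key[OF F]
      have "sqrt (hF F) \<le> sqrt (Kc * K2 * (F - F2d))" using k by simp
      then show "1 / sqrt (Kc * K2 * (F - F2d)) \<le> \<tau> F" unfolding \<tau>_def using k
        by (simp add: frac_le)
    qed
    show "filterlim \<eta> at_top (at_right F2d)"
    proof (rule lim_helper[OF dp _ mult_pos_pos[OF Kc K2]])
      show "F2d * sqrt (E0/2) > 0" using F2dp E0p by simp
      fix F assume F: "F2d < F" "F < F2d + \<delta>"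
      note k = key[OF F]
      have hp: "hF F > 0" using k by simp
      have s1: "sqrt (hF F) \<le> sqrt (Kc * K2 * (F - F2d))" using k by simp
      have s2: "sqrt (E0/2) \<le> sqrt (Ep N (xF F) (YF F) (hF F) (bF F))" using k by simp
      have "F2d * sqrt (E0/2) / sqrt (Kc * K2 * (F - F2d)) \<le> F * sqrt (E0/2) / sqrt (hF F)"
      proof (rule frac_le)
        show "0 \<le> F * sqrt (E0/2)" using F F2dp E0p by simp
        show "F2d * sqrt (E0/2) \<le> F * sqrt (E0/2)" by (rule mult_right_mono) (use F E0p in simp_all)
        show "0 < sqrt (hF F)" using hp by simp
        show "sqrt (hF F) \<le> sqrt (Kc * K2 * (F - F2d))" by (rule s1)
      qed
      also have "\<dots> \<le> F * sqrt (Ep N (xF F) (YF F) (hF F) (bF F)) / sqrt (hF F)"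
        using s2 F F2dp hp by (simp add: divide_right_mono mult_left_mono)
      also have "\<dots> = \<eta> F" unfolding \<eta>_def by (simp add: real_sqrt_divide)
      finally show "F2d * sqrt (E0/2) / sqrt (Kc * K2 * (F - F2d)) \<le> \<eta> F" .
    qed
    show "\<forall>F\<in>{F2d<..<F2d + \<delta>}. \<forall>\<sigma>1\<in>{- 1, 1}. \<forall>\<sigma>2\<in>{- 1, 1}.
        double_lowest_eigenvalue (sv_G \<nu> F (\<i> * complex_of_real (\<sigma>1 * \<tau> F)) (\<sigma>2 * \<eta> F))"
    proof (intro ballI)
      fix F \<sigma>1 \<sigma>2 :: real
      assume "F \<in> {F2d<..<F2d + \<delta>}" and s1: "\<sigma>1 \<in> {-1, 1}" and s2: "\<sigma>2 \<in> {-1, 1}"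
      then have F: "F2d < F" "F < F2d + \<delta>" by auto
      note k = key[OF F]
      have Fp: "F > 0" using F F2dp by simp
      have "Ep N (xF F) (YF F) (hF F) (bF F) > 0" using k E0p by linarith
      then show "double_lowest_eigenvalue (sv_G \<nu> F (\<i> * complex_of_real (\<sigma>1 * \<tau> F)) (\<sigma>2 * \<eta> F))"
        unfolding \<tau>_def \<eta>_def
        by (intro double_from_sol[OF nu N_def Fp bF_def]) (use k s1 s2 in auto)
    qed
  qed
qed

end
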